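(* Let $\varphi=\forall x_1\exists y_1\cdots\forall x_k\exists y_k\,P(x_1,y_1,\dots,x_k,y_k)$ be a positive Horn sentence over a finite relational signature $\sigma$, where $P$ is a conjunction of atomic $\sigma$-formulas containing no equalities. Then for every countable (finite or countably infinite) $\sigma$-structure $\mathcal{B}$ with $\mathcal{B}\models\varphi$, there is a surjective homomorphism $h:\mathcal{T}_\varphi(C_\omega)\to\mathcal{B}$ with $h(C_\omega)=B$.
   Context: Let $f_1,\dots,f_k$ be new function symbols, $f_i$ of arity $i$, and let $\mathrm{Sk}(\varphi)=\forall x_1\cdots\forall x_k\,P(x_1,f_1(x_1),\dots,x_k,f_k(x_1,\dots,x_k))$. Let $C_\omega=\{c_1,c_2,\dots\}$ be countably many new constant symbols. $T_\varphi(C_\omega)$ is the set of closed terms built from $C_\omega$ using $f_1,\dots,f_k$. The canonical model $\mathcal{T}_\varphi(C_\omega)$ is the $\sigma$-structure with domain $T_\varphi(C_\omega)$ in which $R(t_1,\dots,t_p)$ holds iff $R(t_1,\dots,t_p)$ is obtained from some atom of the matrix of $\mathrm{Sk}(\varphi)$ by substituting terms of $T_\varphi(C_\omega)$ for $x_1,\dots,x_k$ (function symbols interpreted syntactically). $C_\omega$ is viewed as a subset of $T_\varphi(C_\omega)$. *)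

theory Defs
  imports Main "HOL-Library.Countable_Set"
begin

datatype var = X nat | Y nat

text \<open>Terms over the new constants c_n (C n) and Skolem symbols f_i (F i args).\<close>
datatype sterm = C nat | F nat "sterm list"

text \<open>T_phi(C_omega): closed terms built from the constants with f_1..f_k, f_i of arity i.\<close>
inductive_set closed_terms :: "nat \<Rightarrow> sterm set" for k :: nat where
  const: "C n \<in> closed_terms k"
| func: "1 \<le> i \<Longrightarrow> i \<le> k \<Longrightarrow> length ts = i \<Longrightarrow> \<forall>t\<in>set ts. t \<in> closed_terms k
          \<Longrightarrow> F i ts \<in> closed_terms k"

text \<open>Substitution of terms s i for x_i in the matrix of Sk(phi): y_i becomes f_i(x_1,...,x_i).\<close>
fun sk_subst :: "(nat \<Rightarrow> sterm) \<Rightarrow> var \<Rightarrow> sterm" where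
  "sk_subst s (X i) = s i"
| "sk_subst s (Y i) = F i (map s [1..<Suc i])"

text \<open>Matrix P: list of atoms (R, argument variables); well-formedness w.r.t. the
  finite relational signature (sig, ar) and quantifier depth k.\<close>
definition wf_matrix :: "'r set \<Rightarrow> ('r \<Rightarrow> nat) \<Rightarrow> nat \<Rightarrow> ('r \<times> var list) list \<Rightarrow> bool" where
  "wf_matrix sig ar k P \<longleftrightarrow>
     (\<forall>(R, vs) \<in> set P. R \<in> sig \<and> length vs = ar R \<and>
        (\<forall>v \<in> set vs. \<exists>i. 1 \<le> i \<and> i \<le> k \<and> (v = X i \<or> v = Y i)))"

definition canon_rel :: "nat \<Rightarrow> ('r \<times> var list) list \<Rightarrow> 'r \<Rightarrow> sterm list \<Rightarrow> bool" where
  "canon_rel k P R ts \<longleftrightarrow>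
     (\<exists>vs s. (R, vs) \<in> set P \<and> (\<forall>i\<in>{1..k}. s i \<in> closed_terms k) \<and> ts = map (sk_subst s) vs)"

definition is_structure :: "'r set \<Rightarrow> ('r \<Rightarrow> nat) \<Rightarrow> 'b set \<Rightarrow> ('r \<Rightarrow> 'b list \<Rightarrow> bool) \<Rightarrow> bool" where
  "is_structure sig ar B I \<longleftrightarrow> B \<noteq> {} \<and>
     (\<forall>R\<in>sig. \<forall>bs. I R bs \<longrightarrow> length bs = ar R \<and> set bs \<subseteq> B)"

text \<open>Satisfaction of forall x_j exists y_j ... forall x_k exists y_k P, with n = k - j + 1
  quantifier pairs remaining.\<close>
primrec qsat :: "'b set \<Rightarrow> ('r \<Rightarrow> 'b list \<Rightarrow> bool) \<Rightarrow> nat \<Rightarrow> ('r \<times> var list) list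
                 \<Rightarrow> nat \<Rightarrow> (var \<Rightarrow> 'b) \<Rightarrow> bool" where
  "qsat B I k P 0 env = (\<forall>(R, vs) \<in> set P. I R (map env vs))"
| "qsat B I k P (Suc n) env =
     (\<forall>b\<in>B. \<exists>c\<in>B. qsat B I k P n (env(X (k - n) := b, Y (k - n) := c)))"

definition models :: "'b set \<Rightarrow> ('r \<Rightarrow> 'b list \<Rightarrow> bool) \<Rightarrow> nat \<Rightarrow> ('r \<times> var list) list \<Rightarrow> bool" where
  "models B I k P \<longleftrightarrow> qsat B I k P k (\<lambda>_. undefined)"

definition canon_hom :: "'r set \<Rightarrow> nat \<Rightarrow> ('r \<times> var list) list \<Rightarrow> 'b set
                         \<Rightarrow> ('r \<Rightarrow> 'b list \<Rightarrow> bool) \<Rightarrow> (sterm \<Rightarrow> 'b) \<Rightarrow> bool" where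
  "canon_hom sig k P B I h \<longleftrightarrow>
     (\<forall>t\<in>closed_terms k. h t \<in> B) \<and>
     (\<forall>R\<in>sig. \<forall>ts. set ts \<subseteq> closed_terms k \<longrightarrow> canon_rel k P R ts \<longrightarrow> I R (map h ts))"

end

theory Submission
  imports Defs
begin

fun EE :: "'b list \<Rightarrow> 'b list \<Rightarrow> var \<Rightarrow> 'b" where
  "EE (b#rbs) (c#rcs) = (EE rbs rcs)(X (Suc (length rbs)) := b, Y (Suc (length rbs)) := c)"
| "EE _ _ = (\<lambda>_. undefined)"

fun sr :: "'b set \<Rightarrow> (nat \<Rightarrow> (var \<Rightarrow> 'b) \<Rightarrow> bool) \<Rightarrow> nat \<Rightarrow> 'b list \<Rightarrow> 'b list" where
  "sr B Q k [] = []"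
| "sr B Q k (b#rbs) = (SOME c. c \<in> B \<and> Q (k - Suc (length rbs)) (EE (b#rbs) (c # sr B Q k rbs))) # sr B Q k rbs"

fun hh :: "'b set \<Rightarrow> (nat \<Rightarrow> (var \<Rightarrow> 'b) \<Rightarrow> bool) \<Rightarrow> nat \<Rightarrow> sterm \<Rightarrow> 'b" where
  "hh B Q k (C n) = from_nat_into B n"
| "hh B Q k (F i ts) = hd (sr B Q k (rev (map (hh B Q k) ts)))"

lemma sr_length[simp]: "length (sr B Q k r) = length r"
  by (induction r) auto

lemma sr_drop: "sr B Q k (drop d r) = drop d (sr B Q k r)"
proof (induction r arbitrary: d)
  case Nil then show ?case by simp
next
  case (Cons a r) then show ?case by (cases d) auto
qed

lemma EE_X: "length rbs = length rcs \<Longrightarrow> 1 \<le> j \<Longrightarrow> j \<le> length rbs \<Longrightarrow> EE rbs rcs (X j) = rev rbs ! (j - 1)"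
proof (induction rbs arbitrary: rcs)
  case Nil then show ?case by simp
next
  case (Cons b rbs)
  then obtain c rcs' where rc: "rcs = c # rcs'" by (cases rcs) auto
  show ?case
  proof (cases "j = Suc (length rbs)")
    case True then show ?thesis using rc by (simp add: nth_append)
  next
    case False
    hence jl: "j - 1 < length rbs" using Cons.prems by simp
    then show ?thesis using Cons rc False by (simp add: nth_append)
  qed
qed

lemma EE_Y: "length rbs = length rcs \<Longrightarrow> 1 \<le> j \<Longrightarrow> j \<le> length rbs \<Longrightarrow> EE rbs rcs (Y j) = rev rcs ! (j - 1)"
proof (induction rbs arbitrary: rcs)
  case Nil then show ?case by simp
next
  case (Cons b rbs)
  then obtain c rcs' where rc: "rcs = c # rcs'" by (cases rcs) auto
  show ?case
  proof (cases "j = Suc (length rbs)")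
    case True then show ?thesis using rc Cons by (simp add: nth_append)
  next
    case False
    hence jl: "j - 1 < length rbs" using Cons.prems by simp
    then show ?thesis using Cons rc False by (simp add: nth_append)
  qed
qed

lemma inv:
  assumes "models B I k P"
  shows "length r \<le> k \<Longrightarrow> set r \<subseteq> B \<Longrightarrow>
     qsat B I k P (k - length r) (EE r (sr B (qsat B I k P) k r)) \<and> set (sr B (qsat B I k P) k r) \<subseteq> B"
proof (induction r)
  case Nil then show ?case using assms by (simp add: models_def)
next
  case (Cons b r)
  let ?Q = "qsat B I k P"
  let ?m = "length r"
  have IH: "?Q (k - ?m) (EE r (sr B ?Q k r))" "set (sr B ?Q k r) \<subseteq> B" using Cons by auto
  have km: "k - ?m = Suc (k - Suc ?m)" using Cons.prems by simp
  have kk: "k - (k - Suc ?m) = Suc ?m" using Cons.prems by simp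
  have bB: "b \<in> B" using Cons.prems by simp
  from IH(1) have "\<forall>b\<in>B. \<exists>c\<in>B. ?Q (k - Suc ?m) ((EE r (sr B ?Q k r))(X (Suc ?m) := b, Y (Suc ?m) := c))"
    unfolding km qsat.simps kk .
  then obtain c where "c \<in> B \<and> ?Q (k - Suc ?m) (EE (b#r) (c # sr B ?Q k r))" using bB by auto
  hence "(SOME c. c \<in> B \<and> ?Q (k - Suc ?m) (EE (b#r) (c # sr B ?Q k r))) \<in> B \<and>
     ?Q (k - Suc ?m) (EE (b#r) ((SOME c. c \<in> B \<and> ?Q (k - Suc ?m) (EE (b#r) (c # sr B ?Q k r))) # sr B ?Q k r))"
    by (rule someI)
  then show ?case using IH(2) by (simp del: EE.simps)
qed

theorem mainTheorem9:
  fixes sig :: "'r set" and ar :: "'r \<Rightarrow> nat" and k :: nat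
    and P :: "('r \<times> var list) list"
    and B :: "'b set" and I :: "'r \<Rightarrow> 'b list \<Rightarrow> bool"
  assumes "finite sig"
    and "wf_matrix sig ar k P"
    and "is_structure sig ar B I"
    and "countable B"
    and "models B I k P"
  shows "\<exists>h. canon_hom sig k P B I h \<and> h ` closed_terms k = B \<and> h ` range C = B"
proof -
  let ?Q = "qsat B I k P"
  let ?h = "hh B ?Q k"
  have Bne: "B \<noteq> {}" using assms(3) by (simp add: is_structure_def)
  have rngC: "?h ` range C = B"
    using range_from_nat_into[OF Bne assms(4)] by (auto simp: image_image)
  have memB: "t \<in> closed_terms k \<Longrightarrow> ?h t \<in> B" for t
  proof (induction rule: closed_terms.induct)
    case (const n) then show ?case using from_nat_into[OF Bne] by simp
  next
    case (func i ts)
    let ?r = "rev (map ?h ts)"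
    have "length ?r \<le> k" "set ?r \<subseteq> B" using func by auto
    from inv[OF assms(5) this] have "set (sr B ?Q k ?r) \<subseteq> B" by simp
    moreover have "?r \<noteq> []" using func by auto
    ultimately show ?case by (cases ?r) auto
  qed
  have closed_C: "range C \<subseteq> closed_terms k" by (auto intro: closed_terms.const)
  have img: "?h ` closed_terms k = B"
    using memB rngC closed_C by blast
  have hom: "I R (map ?h ts)" if "canon_rel k P R ts" for R ts
  proof -
    from that obtain vs s where vs: "(R, vs) \<in> set P" and s: "\<forall>i\<in>{1..k}. s i \<in> closed_terms k"
      and ts: "ts = map (sk_subst s) vs" unfolding canon_rel_def by blast
    define bs where "bs = map (?h \<circ> s) [1..<Suc k]"
    define L where "L = rev bs"
    have lenL: "length L = k" by (simp add: L_def bs_def)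
    have LB: "set L \<subseteq> B" using s memB by (auto simp: L_def bs_def)
    from inv[OF assms(5) _ LB] lenL have "?Q 0 (EE L (sr B ?Q k L))" by simp
    hence allP: "\<forall>(R, vs) \<in> set P. I R (map (EE L (sr B ?Q k L)) vs)" by simp
    have agree: "?h (sk_subst s v) = EE L (sr B ?Q k L) v" if v: "v \<in> set vs" for v
    proof -
      from v vs assms(2) obtain j where j: "1 \<le> j" "j \<le> k" "v = X j \<or> v = Y j"
        unfolding wf_matrix_def by fastforce
      have bsj: "bs ! (j - 1) = ?h (s j)" using j unfolding bs_def by (simp del: upt_Suc)
      show ?thesis
      proof (cases "v = X j")
        case True
        then show ?thesis using j lenL bsj by (simp add: EE_X L_def)
      next
        case False
        hence vY: "v = Y j" using j by simp
        have tk: "map (?h \<circ> s) [1..<Suc j] = take j bs"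
          unfolding bs_def using j by (simp add: take_map take_upt min_def del: upt_Suc)
        have "rev (take j bs) = drop (k - j) L"
          unfolding L_def rev_take using lenL L_def by simp
        hence "?h (sk_subst s v) = hd (drop (k - j) (sr B ?Q k L))"
          using vY tk by (simp add: sr_drop map_map comp_def[symmetric] del: upt_Suc)
        also have "\<dots> = sr B ?Q k L ! (k - j)" using j lenL by (simp add: hd_drop_conv_nth)
        also have "\<dots> = rev (sr B ?Q k L) ! (j - 1)" using j lenL by (simp add: rev_nth)
        also have "\<dots> = EE L (sr B ?Q k L) v" using vY j lenL by (simp add: EE_Y)
        finally show ?thesis .
      qed
    qed
    have "map ?h ts = map (EE L (sr B ?Q k L)) vs" using ts agree by simp
    thus ?thesis using allP vs by fastforce
  qed
  have "canon_hom sig k P B I ?h"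
    unfolding canon_hom_def using memB hom by blast
  thus ?thesis using img rngC by blast
qed

end
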